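(* Let $(a_{n,k})_{n,k\ge 1}$ be complex numbers such that each power series $1+\sum_{k=1}^{\infty}a_{n,k}\lambda^k$ is analytic (near $\lambda=0$), the infinite product $\prod_{n=1}^{\infty}\big(1+\sum_{k=1}^{\infty}a_{n,k}\lambda^k\big)$ converges uniformly, and every series of the form $\sum_{n=1}^{\infty}\prod_{j=1}^{m}a_{n,k_j}$ ($m\in\mathbb{N}$, $k_j\in\mathbb{N}$) converges. Write $$\prod_{n=1}^{\infty}\Big(1+\sum_{k=1}^{\infty}a_{n,k}\lambda^k\Big)=1+\sum_{k=1}^{\infty}X_k\lambda^k.$$ Then for every $k\in\mathbb{N}$, $$X_k=\sum_{L\vdash k}\frac{1}{C_{stb}(L)}\sum_{\sigma\in S_{\ell(L)}}\operatorname{sign}(\sigma)\,\mathbb{A}_{\sigma,L}.$$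
   Context: $L\vdash k$ means $L=[x_1,\dots,x_m]$ is a partition of $k$: a multiset of positive integers with $\sum x_i=k$; $\ell(L)=m$ is its length. $C_{stb}(L):=\prod_{x}(\#\{i: x_i=x\})!$, the product over distinct values $x$ occurring in $L$. Write $L=[k_1,\dots,k_m]$ with $k_1\le\cdots\le k_m$. For $\sigma\in S_m$ (symmetric group, $\operatorname{sign}$ its sign), write $\sigma$ as a product of disjoint cycles $C_1,\dots,C_r$, keeping fixed points as cycles of length one; then $\mathbb{A}_{\sigma,L}:=\prod_{t=1}^{r}\big(\sum_{n=1}^{\infty}\prod_{i\in C_t}a_{n,k_i}\big)$. *)

theory Defs
  imports "HOL-Analysis.Analysis" "HOL-Combinatorics.Combinatorics"
begin

definition partitions_of :: "nat \<Rightarrow> nat list set" where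
  "partitions_of k = {L. sorted L \<and> 0 \<notin> set L \<and> sum_list L = k}"

definition C_stb :: "nat list \<Rightarrow> nat" where
  "C_stb L = (\<Prod>x\<in>set L. fact (count_list L x))"

definition cycles_of :: "(nat \<Rightarrow> nat) \<Rightarrow> nat \<Rightarrow> nat set set" where
  "cycles_of \<sigma> m = (\<lambda>i. orbit \<sigma> i) ` {..<m}"

text \<open>A_{sigma,L} = prod over cycles C of sum_{n>=1} prod_{i in C} a_{n,k_i}
  (positions of L are 0-indexed here; the sequence index n starts at 1).\<close>
definition A_coef :: "(nat \<Rightarrow> nat \<Rightarrow> complex) \<Rightarrow> (nat \<Rightarrow> nat) \<Rightarrow> nat list \<Rightarrow> complex" where
  "A_coef a \<sigma> L = (\<Prod>C\<in>cycles_of \<sigma> (length L). (\<Sum>n. \<Prod>i\<in>C. a (Suc n) (L ! i)))"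

definition factor_fun :: "(nat \<Rightarrow> nat \<Rightarrow> complex) \<Rightarrow> nat \<Rightarrow> complex \<Rightarrow> complex" where
  "factor_fun a n z = 1 + (\<Sum>k. a n (Suc k) * z ^ Suc k)"

end

theory Submission
  imports Defs "HOL-Complex_Analysis.Complex_Analysis"
begin



lemma sign_sum_fix:
  fixes f :: "nat \<Rightarrow> 'b"
  shows "(\<Sum>\<sigma>\<in>{\<sigma>. \<sigma> permutes {..<m} \<and> (\<forall>i<m. f (\<sigma> i) = f i)}. (of_int (sign \<sigma>) :: complex))
         = (if inj_on f {..<m} then 1 else 0)"
proof (cases "inj_on f {..<m}")
  case True
  have "{\<sigma>. \<sigma> permutes {..<m} \<and> (\<forall>i<m. f (\<sigma> i) = f i)} = {id}"
  proof (intro set_eqI iffI)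
    fix \<sigma> assume "\<sigma> \<in> {\<sigma>. \<sigma> permutes {..<m} \<and> (\<forall>i<m. f (\<sigma> i) = f i)}"
    then have p: "\<sigma> permutes {..<m}" and e: "\<forall>i<m. f (\<sigma> i) = f i" by auto
    have "\<sigma> i = i" for i
    proof (cases "i < m")
      case True
      then have "\<sigma> i < m" using p permutes_in_image by fastforce
      then show ?thesis using True e inj_onD[OF \<open>inj_on f {..<m}\<close>] by auto
    next
      case False then show ?thesis using permutes_not_in[OF p] by auto
    qed
    then show "\<sigma> \<in> {id}" by auto
  qed (auto simp: permutes_id)
  then show ?thesis using True by simp
next
  case False
  then obtain i j where ij: "i < m" "j < m" "i \<noteq> j" "f i = f j"
    unfolding inj_on_def by auto
  define \<tau> where "\<tau> = Transposition.transpose i j"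
  define S where "S = {\<sigma>. \<sigma> permutes {..<m} \<and> (\<forall>i<m. f (\<sigma> i) = f i)}"
  have tp: "\<tau> permutes {..<m}" unfolding \<tau>_def using ij by (intro permutes_swap_id) auto
  have ft: "f (\<tau> x) = f x" for x unfolding \<tau>_def using ij by (simp add: Transposition.transpose_def)
  have tt: "\<tau> \<circ> (\<tau> \<circ> \<sigma>) = \<sigma>" for \<sigma> unfolding \<tau>_def by (auto simp: fun_eq_iff)
  have mem: "\<tau> \<circ> \<sigma> \<in> S" if "\<sigma> \<in> S" for \<sigma>
    using that tp ft unfolding S_def by (auto intro: permutes_compose)
  have bij: "bij_betw (\<lambda>\<sigma>. \<tau> \<circ> \<sigma>) S S"
    by (rule bij_betw_byWitness[where f' = "\<lambda>\<sigma>. \<tau> \<circ> \<sigma>"]) (auto simp: tt mem)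
  have fin: "finite S" unfolding S_def
    by (rule finite_subset[OF _ finite_permutations[of "{..<m}"]]) auto
  have sg: "sign (\<tau> \<circ> \<sigma>) = - sign \<sigma>" if "\<sigma> \<in> S" for \<sigma>
  proof -
    have "permutation \<sigma>" using that unfolding S_def by (auto simp: permutation_permutes)
    moreover have "permutation \<tau>" using tp by (auto simp: permutation_permutes)
    ultimately show ?thesis by (simp add: sign_compose \<tau>_def sign_swap_id ij)
  qed
  have "(\<Sum>\<sigma>\<in>S. (of_int (sign \<sigma>) :: complex)) = (\<Sum>\<sigma>\<in>S. of_int (sign (\<tau> \<circ> \<sigma>)))"
    using sum.reindex_bij_betw[OF bij, of "\<lambda>\<sigma>. (of_int (sign \<sigma>) :: complex)"] by simp
  also have "\<dots> = - (\<Sum>\<sigma>\<in>S. (of_int (sign \<sigma>) :: complex))"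
    by (simp add: sg sum_negf)
  finally have "(\<Sum>\<sigma>\<in>S. (of_int (sign \<sigma>) :: complex)) = 0" by simp
  then show ?thesis using False unfolding S_def by simp
qed



lemma orbit_facts:
  fixes m :: nat
  assumes p: "\<sigma> permutes {..<m}"
  shows "\<And>i. i < m \<Longrightarrow> i \<in> orbit \<sigma> i"
    and "\<And>i. i < m \<Longrightarrow> orbit \<sigma> i \<subseteq> {..<m}"
    and "\<And>i j. j \<in> orbit \<sigma> i \<Longrightarrow> orbit \<sigma> j = orbit \<sigma> i"
    and "\<And>i. orbit \<sigma> (\<sigma> i) = orbit \<sigma> i"
proof -
  have perm: "permutation \<sigma>" unfolding permutation_permutes using p finite_lessThan by blast
  show "\<And>i. i < m \<Longrightarrow> i \<in> orbit \<sigma> i" using perm by (rule permutation_self_in_orbit)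
  show "\<And>i. i < m \<Longrightarrow> orbit \<sigma> i \<subseteq> {..<m}" using p by (intro permutes_orbit_subset) auto
  show "\<And>i j. j \<in> orbit \<sigma> i \<Longrightarrow> orbit \<sigma> j = orbit \<sigma> i"
    using cyclic_on_orbit'[OF perm] orbit_cyclic_eq3 by metis
  show "\<And>i. orbit \<sigma> (\<sigma> i) = orbit \<sigma> i" using perm by (rule permutation_orbit_step)
qed

lemma const_on_orbit:
  fixes m :: nat
  assumes p: "\<sigma> permutes {..<m}" and e: "\<forall>i<m. f (\<sigma> i) = f i" and i: "i < m"
    and j: "j \<in> orbit \<sigma> i"
  shows "f j = f i"
  using j
proof induction
  case base then show ?case using e i by auto
next
  case (step y)
  have "y < m" using orbit_facts(2)[OF p i] step.hyps by auto
  then show ?case using e step.IH by auto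
qed

lemma cyc_expand:
  fixes w :: "'b \<Rightarrow> nat \<Rightarrow> 'c :: comm_semiring_1"
  assumes p: "\<sigma> permutes {..<m}" and A: "finite A"
  shows "(\<Prod>C\<in>cycles_of \<sigma> m. \<Sum>n\<in>A. \<Prod>i\<in>C. w n i)
       = (\<Sum>f\<in>{f\<in>{..<m} \<rightarrow>\<^sub>E A. \<forall>i<m. f (\<sigma> i) = f i}. \<Prod>i<m. w (f i) i)"
proof -
  define Cy where "Cy = cycles_of \<sigma> m"
  note of = orbit_facts[OF p]
  have finCy: "finite Cy" unfolding Cy_def cycles_of_def by auto
  have finC: "finite C" if "C \<in> Cy" for C
    using that of(2) unfolding Cy_def cycles_of_def by (auto intro: finite_subset)
  have "(\<Prod>C\<in>Cy. \<Sum>n\<in>A. \<Prod>i\<in>C. w n i) = (\<Sum>g\<in>Cy \<rightarrow>\<^sub>E A. \<Prod>C\<in>Cy. \<Prod>i\<in>C. w (g C) i)"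
    by (rule prod_sum_PiE) (use finCy A in auto)
  also have "\<dots> = (\<Sum>f\<in>{f\<in>{..<m} \<rightarrow>\<^sub>E A. \<forall>i<m. f (\<sigma> i) = f i}. \<Prod>i<m. w (f i) i)"
  proof (rule sum.reindex_bij_witness[where j = "\<lambda>g. restrict (\<lambda>i. g (orbit \<sigma> i)) {..<m}"
        and i = "\<lambda>f. restrict (\<lambda>C. f (SOME x. x \<in> C)) Cy"])
    fix g assume g: "g \<in> Cy \<rightarrow>\<^sub>E A"
    show "restrict (\<lambda>C. restrict (\<lambda>i. g (orbit \<sigma> i)) {..<m} (SOME x. x \<in> C)) Cy = g"
    proof (rule ext)
      fix C show "restrict (\<lambda>C. restrict (\<lambda>i. g (orbit \<sigma> i)) {..<m} (SOME x. x \<in> C)) Cy C = g C"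
      proof (cases "C \<in> Cy")
        case True
        then obtain i where i: "i < m" "C = orbit \<sigma> i" unfolding Cy_def cycles_of_def by auto
        have "(SOME x. x \<in> C) \<in> C" using i of(1) by (metis someI_ex)
        moreover have "(SOME x. x \<in> C) < m" using calculation i of(2) by blast
        moreover have "orbit \<sigma> (SOME x. x \<in> C) = C" using calculation(1) i of(3)[where i=i] by blast
        ultimately show ?thesis using True by simp
      next
        case False
        have "g C = undefined" using g False by (rule PiE_arb)
        then show ?thesis using False by (simp only: restrict_apply' restrict_def if_False)
      qed
    qed
    show "restrict (\<lambda>i. g (orbit \<sigma> i)) {..<m} \<in> {f \<in> {..<m} \<rightarrow>\<^sub>E A. \<forall>i<m. f (\<sigma> i) = f i}"
    proof -
      have "orbit \<sigma> i \<in> Cy" if "i < m" for i using that unfolding Cy_def cycles_of_def by auto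
      moreover have "\<sigma> i < m" if "i < m" for i using p that permutes_in_image by fastforce
      ultimately show ?thesis using g of(4) by auto
    qed
    have "(\<Prod>C\<in>Cy. \<Prod>i\<in>C. w (g C) i) = (\<Prod>C\<in>Cy. \<Prod>i\<in>{i. i \<in> {..<m} \<and> orbit \<sigma> i = C}. w (g (orbit \<sigma> i)) i)"
    proof (rule prod.cong[OF refl])
      fix C assume C: "C \<in> Cy"
      then obtain j where j: "j < m" "C = orbit \<sigma> j" unfolding Cy_def cycles_of_def by auto
      have oc: "orbit \<sigma> i = C" if "i \<in> C" for i
      proof -
        have "orbit \<sigma> i = orbit \<sigma> j" using that j(2) by (intro of(3)) simp
        then show ?thesis using j(2) by simp
      qed
      have "{i. i \<in> {..<m} \<and> orbit \<sigma> i = C} = C"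
      proof (intro set_eqI iffI)
        fix i assume "i \<in> {i. i \<in> {..<m} \<and> orbit \<sigma> i = C}"
        then have "i < m" "orbit \<sigma> i = C" by auto
        then show "i \<in> C" using of(1)[of i] by blast
      next
        fix i assume i: "i \<in> C"
        then have "i < m" using of(2)[OF j(1)] j(2) by auto
        then show "i \<in> {i. i \<in> {..<m} \<and> orbit \<sigma> i = C}" using oc[OF i] by simp
      qed
      then have "(\<Prod>i\<in>{i. i \<in> {..<m} \<and> orbit \<sigma> i = C}. w (g (orbit \<sigma> i)) i) = (\<Prod>i\<in>C. w (g (orbit \<sigma> i)) i)"
        by (simp only:)
      also have "\<dots> = (\<Prod>i\<in>C. w (g C) i)"
        by (rule prod.cong[OF refl]) (simp add: oc)
      finally show "(\<Prod>i\<in>C. w (g C) i) = (\<Prod>i\<in>{i. i \<in> {..<m} \<and> orbit \<sigma> i = C}. w (g (orbit \<sigma> i)) i)"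
        by simp
    qed
    also have "\<dots> = (\<Prod>i<m. w (g (orbit \<sigma> i)) i)"
      by (rule prod.group) (auto simp: finCy Cy_def cycles_of_def)
    finally show "(\<Prod>i<m. w (restrict (\<lambda>i. g (orbit \<sigma> i)) {..<m} i) i) = (\<Prod>C\<in>Cy. \<Prod>i\<in>C. w (g C) i)"
      by simp
  next
    fix f assume f: "f \<in> {f \<in> {..<m} \<rightarrow>\<^sub>E A. \<forall>i<m. f (\<sigma> i) = f i}"
    show "restrict (\<lambda>i. restrict (\<lambda>C. f (SOME x. x \<in> C)) Cy (orbit \<sigma> i)) {..<m} = f"
    proof (rule ext)
      fix i show "restrict (\<lambda>i. restrict (\<lambda>C. f (SOME x. x \<in> C)) Cy (orbit \<sigma> i)) {..<m} i = f i"
      proof (cases "i < m")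
        case True
        have "(SOME x. x \<in> orbit \<sigma> i) \<in> orbit \<sigma> i" using True of(1) by (metis someI_ex)
        then have "f (SOME x. x \<in> orbit \<sigma> i) = f i" using const_on_orbit[OF p _ True] f by auto
        moreover have "orbit \<sigma> i \<in> Cy" using True unfolding Cy_def cycles_of_def by auto
        ultimately show ?thesis using True by auto
      next
        case False
        have "f i = undefined" using f False by (auto intro: PiE_arb)
        then show ?thesis using False by (simp add: restrict_def)
      qed
    qed
    show "restrict (\<lambda>C. f (SOME x. x \<in> C)) Cy \<in> Cy \<rightarrow>\<^sub>E A"
    proof -
      have "f (SOME x. x \<in> C) \<in> A" if "C \<in> Cy" for C
      proof -
        obtain i where i: "i < m" "C = orbit \<sigma> i" using \<open>C \<in> Cy\<close> unfolding Cy_def cycles_of_def by auto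
        have "(SOME x. x \<in> C) \<in> C" using i of(1) by (metis someI_ex)
        then show ?thesis using i of(2) f by auto
      qed
      then show ?thesis by auto
    qed
  qed
  finally show ?thesis unfolding Cy_def .
qed



lemma fps_prod_nth:
  fixes G :: "'b \<Rightarrow> 'a::comm_ring_1 fps"
  assumes "finite A"
  shows "k \<le> K \<Longrightarrow> fps_nth (\<Prod>n\<in>A. G n) k
           = (\<Sum>h\<in>{h\<in>A \<rightarrow>\<^sub>E {..K}. sum h A = k}. \<Prod>n\<in>A. fps_nth (G n) (h n))"
  using assms
proof (induction A arbitrary: k rule: finite_induct)
  case empty
  show ?case by (cases "k = 0") auto
next
  case (insert x A)
  define H where "H = (\<lambda>k. {h\<in>A \<rightarrow>\<^sub>E {..K}. sum h A = k})"
  have finH: "finite (H j)" for j unfolding H_def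
    by (rule finite_subset[of _ "A \<rightarrow>\<^sub>E {..K}"]) (auto intro: finite_PiE insert(1))
  have "fps_nth (\<Prod>n\<in>insert x A. G n) k = fps_nth (G x * (\<Prod>n\<in>A. G n)) k"
    using insert by simp
  also have "\<dots> = (\<Sum>i=0..k. fps_nth (G x) i * fps_nth (\<Prod>n\<in>A. G n) (k - i))"
    by (simp add: fps_mult_nth)
  also have "\<dots> = (\<Sum>i=0..k. fps_nth (G x) i * (\<Sum>h\<in>H (k - i). \<Prod>n\<in>A. fps_nth (G n) (h n)))"
    using insert by (simp add: H_def)
  also have "\<dots> = (\<Sum>i=0..k. \<Sum>h\<in>H (k - i). fps_nth (G x) i * (\<Prod>n\<in>A. fps_nth (G n) (h n)))"
    by (simp add: sum_distrib_left)
  also have "\<dots> = (\<Sum>(i,h)\<in>Sigma {0..k} (\<lambda>i. H (k - i)). fps_nth (G x) i * (\<Prod>n\<in>A. fps_nth (G n) (h n)))"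
    by (rule sum.Sigma) (use finH in auto)
  also have "\<dots> = (\<Sum>h\<in>{h\<in>insert x A \<rightarrow>\<^sub>E {..K}. sum h (insert x A) = k}. \<Prod>n\<in>insert x A. fps_nth (G n) (h n))"
  proof (rule sum.reindex_bij_witness[where j = "\<lambda>p. (snd p)(x := fst p)" and i = "\<lambda>h. (h x, h(x := undefined))"])
    fix p assume p: "p \<in> Sigma {0..k} (\<lambda>i. H (k - i))"
    obtain i h where ih: "p = (i, h)" by (cases p)
    have i: "i \<le> k" and h: "h \<in> A \<rightarrow>\<^sub>E {..K}" "sum h A = k - i"
      using p ih by (auto simp: H_def)
    have hx: "h x = undefined" using h(1) insert(2) by (auto intro: PiE_arb)
    show "(((snd p)(x := fst p)) x, ((snd p)(x := fst p))(x := undefined)) = p"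
      using ih hx by auto
    have "sum (h(x := i)) A = sum h A" by (rule sum.cong) (use insert(2) in auto)
    then have s: "sum (h(x := i)) (insert x A) = i + sum h A"
      using insert(1,2) by (simp add: sum.insert)
    show "(snd p)(x := fst p) \<in> {h \<in> insert x A \<rightarrow>\<^sub>E {..K}. sum h (insert x A) = k}"
      using ih h i s insert.prems by (auto simp: PiE_def Pi_def extensional_def)
    have "(\<Prod>n\<in>A. fps_nth (G n) ((h(x := i)) n)) = (\<Prod>n\<in>A. fps_nth (G n) (h n))"
      by (rule prod.cong) (use insert(2) in auto)
    then have "(\<Prod>n\<in>insert x A. fps_nth (G n) ((h(x := i)) n)) = fps_nth (G x) i * (\<Prod>n\<in>A. fps_nth (G n) (h n))"
      using insert(1,2) by (simp add: prod.insert)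
    then show "(\<Prod>n\<in>insert x A. fps_nth (G n) (((snd p)(x := fst p)) n)) = (case p of (i, h) \<Rightarrow> fps_nth (G x) i * (\<Prod>n\<in>A. fps_nth (G n) (h n)))"
      using ih by simp
  next
    fix h assume h: "h \<in> {h \<in> insert x A \<rightarrow>\<^sub>E {..K}. sum h (insert x A) = k}"
    show "(snd (h x, h(x := undefined)))(x := fst (h x, h(x := undefined))) = h" by simp
    have "sum (h(x := undefined)) A = sum h A" by (rule sum.cong) (use insert(2) in auto)
    then have s: "sum h (insert x A) = h x + sum (h(x := undefined)) A"
      using insert(1,2) by (simp add: sum.insert)
    have "h(x := undefined) \<in> A \<rightarrow>\<^sub>E {..K}"
      using h insert(2) by (auto simp: PiE_def Pi_def extensional_def)
    then show "(h x, h(x := undefined)) \<in> Sigma {0..k} (\<lambda>i. H (k - i))"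
      using h s by (auto simp: H_def)
  qed
  finally show ?case .
qed



definition Injs :: "nat \<Rightarrow> 'b set \<Rightarrow> (nat \<Rightarrow> 'b) set" where
  "Injs m A = {f \<in> {..<m} \<rightarrow>\<^sub>E A. inj_on f {..<m}}"

definition FF :: "('b \<Rightarrow> nat \<Rightarrow> complex) \<Rightarrow> 'b set \<Rightarrow> nat list \<Rightarrow> complex" where
  "FF b A L = (\<Sum>f\<in>Injs (length L) A. \<Prod>i<length L. b (f i) (L ! i))"

definition comps :: "nat \<Rightarrow> nat list set" where
  "comps k = {L. 0 \<notin> set L \<and> sum_list L = k}"

lemma length_le_sum_list: "0 \<notin> set L \<Longrightarrow> length L \<le> sum_list (L :: nat list)"
  by (induction L) auto

lemma finite_comps: "finite (comps k)"
proof (rule finite_subset)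
  show "comps k \<subseteq> {xs. set xs \<subseteq> {..k} \<and> length xs \<le> k}"
    unfolding comps_def using length_le_sum_list member_le_sum_list by fastforce
  show "finite {xs. set xs \<subseteq> {..k} \<and> length xs \<le> k}"
    by (rule finite_lists_length_le) simp
qed

lemma partitions_sub: "partitions_of k \<subseteq> comps k"
  unfolding partitions_of_def comps_def by auto

lemma finite_partitions: "finite (partitions_of k)"
  using finite_subset[OF partitions_sub finite_comps] .

lemma FF_mset:
  assumes "mset L = mset L'"
  shows "FF b A L = FF b A L'"
proof -
  obtain p where p: "p permutes {..<length L'}" "permute_list p L' = L"
    using mset_eq_permutation[OF assms] by blast
  define m where "m = length L'"
  have lm: "length L = m" using p(2) m_def by auto
  have pm: "p permutes {..<m}" using p(1) m_def by simp
  have ip: "inv p permutes {..<m}" using pm by (rule permutes_inv)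
  have Li: "L ! i = L' ! p i" if "i < m" for i
  proof -
    have "permute_list p L' ! i = L' ! p i" using permute_list_nth[OF p(1)] that m_def by blast
    then show ?thesis using p(2) by simp
  qed
  have pin: "p i < m \<longleftrightarrow> i < m" for i using permutes_in_image[OF pm] by simp
  have ipin: "inv p i < m \<longleftrightarrow> i < m" for i using permutes_in_image[OF ip] by simp
  have FL: "FF b A L = (\<Sum>f\<in>Injs m A. \<Prod>i<m. b (f i) (L ! i))" unfolding FF_def lm ..
  have FL': "FF b A L' = (\<Sum>f\<in>Injs m A. \<Prod>i<m. b (f i) (L' ! i))" unfolding FF_def m_def ..
  have "(\<Sum>f\<in>Injs m A. \<Prod>i<m. b (f i) (L ! i)) = (\<Sum>f\<in>Injs m A. \<Prod>i<m. b (f i) (L' ! i))"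
  proof (rule sum.reindex_bij_witness[where j = "\<lambda>f. restrict (f \<circ> inv p) {..<m}"
        and i = "\<lambda>g. restrict (g \<circ> p) {..<m}"])
    fix f assume f: "f \<in> Injs m A"
    show "restrict (restrict (f \<circ> inv p) {..<m} \<circ> p) {..<m} = f"
    proof (rule ext)
      fix x show "restrict (restrict (f \<circ> inv p) {..<m} \<circ> p) {..<m} x = f x"
      proof (cases "x < m")
        case True then show ?thesis using pin permutes_inverses(2)[OF pm] by simp
      next
        case False
        have "f x = undefined" using f False PiE_arb[of f "{..<m}" "\<lambda>_. A" x] by (simp add: Injs_def)
        then show ?thesis using False by simp
      qed
    qed
    show "restrict (f \<circ> inv p) {..<m} \<in> Injs m A"
    proof -
      have "inj_on (f \<circ> inv p) {..<m}"
      proof (rule comp_inj_on)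
        show "inj_on (inv p) {..<m}" using permutes_inj_on[OF ip] .
        have "inv p ` {..<m} = {..<m}" using permutes_image[OF ip] .
        then show "inj_on f (inv p ` {..<m})" using f by (simp add: Injs_def)
      qed
      then show ?thesis using f ipin by (auto simp: Injs_def inj_on_def)
    qed
    have "(\<Prod>i<m. b (restrict (f \<circ> inv p) {..<m} i) (L' ! i))
        = (\<Prod>i<m. b (f (inv p i)) (L' ! i))" by (rule prod.cong) auto
    also have "\<dots> = (\<Prod>i<m. b (f (inv p (p i))) (L' ! p i))"
      using prod.permute[OF pm, of "\<lambda>i. b (f (inv p i)) (L' ! i)"] by (simp add: o_def)
    also have "\<dots> = (\<Prod>i<m. b (f i) (L ! i))"
      by (rule prod.cong) (auto simp: permutes_inverses(2)[OF pm] Li)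
    finally show "(\<Prod>i<m. b (restrict (f \<circ> inv p) {..<m} i) (L' ! i)) = (\<Prod>i<m. b (f i) (L ! i))" .
  next
    fix g assume g: "g \<in> Injs m A"
    show "restrict (restrict (g \<circ> p) {..<m} \<circ> inv p) {..<m} = g"
    proof (rule ext)
      fix x show "restrict (restrict (g \<circ> p) {..<m} \<circ> inv p) {..<m} x = g x"
      proof (cases "x < m")
        case True then show ?thesis using ipin permutes_inverses(1)[OF pm] by simp
      next
        case False
        have "g x = undefined" using g False PiE_arb[of g "{..<m}" "\<lambda>_. A" x] by (simp add: Injs_def)
        then show ?thesis using False by simp
      qed
    qed
    show "restrict (g \<circ> p) {..<m} \<in> Injs m A"
    proof -
      have "inj_on (g \<circ> p) {..<m}"
      proof (rule comp_inj_on)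
        show "inj_on p {..<m}" using permutes_inj_on[OF pm] .
        have "p ` {..<m} = {..<m}" using permutes_image[OF pm] .
        then show "inj_on g (p ` {..<m})" using g by (simp add: Injs_def)
      qed
      then show ?thesis using g pin by (auto simp: Injs_def inj_on_def)
    qed
  qed
  then show ?thesis using FL FL' by simp
qed

lemma C_stb_alt: "C_stb L = (\<Prod>x\<in>set_mset (mset L). fact (count (mset L) x))"
  unfolding C_stb_def by (simp add: count_mset)

lemma sym_sum:
  "(\<Sum>L\<in>partitions_of k. (1 / of_nat (C_stb L)) * FF b A L)
   = (\<Sum>L\<in>comps k. FF b A L / fact (length L))"
proof -
  have "(\<Sum>L\<in>comps k. FF b A L / fact (length L))
      = (\<Sum>L\<in>partitions_of k. \<Sum>L'\<in>{L'. L' \<in> comps k \<and> sort L' = L}. FF b A L' / fact (length L'))"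
  proof (rule sum.group[symmetric])
    show "finite (comps k)" by (rule finite_comps)
    show "finite (partitions_of k)" by (rule finite_partitions)
    show "sort ` comps k \<subseteq> partitions_of k"
      unfolding comps_def partitions_of_def
      by (auto simp: sum_mset_sum_list[symmetric])
  qed
  also have "\<dots> = (\<Sum>L\<in>partitions_of k. (1 / of_nat (C_stb L)) * FF b A L)"
  proof (rule sum.cong[OF refl])
    fix L assume L: "L \<in> partitions_of k"
    have eq: "{L'. L' \<in> comps k \<and> sort L' = L} = permutations_of_multiset (mset L)"
    proof (intro set_eqI iffI)
      fix L' assume "L' \<in> {L'. L' \<in> comps k \<and> sort L' = L}"
      then have "mset L' = mset L" by auto
      then show "L' \<in> permutations_of_multiset (mset L)" by (simp add: permutations_of_multiset_def)
    next
      fix L' assume "L' \<in> permutations_of_multiset (mset L)"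
      then have ms: "mset L' = mset L" by (simp add: permutations_of_multiset_def)
      then have "set L' = set L" by (metis set_mset_mset)
      moreover have "sum_list L' = sum_list L" using ms by (metis sum_mset_sum_list)
      moreover have "sort L' = L" using L ms by (intro properties_for_sort) (auto simp: partitions_of_def)
      ultimately show "L' \<in> {L'. L' \<in> comps k \<and> sort L' = L}"
        using L by (auto simp: comps_def partitions_of_def)
    qed
    have "(\<Sum>L'\<in>permutations_of_multiset (mset L). FF b A L' / fact (length L'))
        = (\<Sum>L'\<in>permutations_of_multiset (mset L). FF b A L / fact (length L))"
    proof (rule sum.cong[OF refl])
      fix L' assume "L' \<in> permutations_of_multiset (mset L)"
      then have ms: "mset L' = mset L" by (simp add: permutations_of_multiset_def)
      then show "FF b A L' / fact (length L') = FF b A L / fact (length L)"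
        using FF_mset[OF ms, of b A] by (metis size_mset)
    qed
    also have "\<dots> = of_nat (card (permutations_of_multiset (mset L))) * FF b A L / fact (length L)"
      by simp
    also have "\<dots> = (1 / of_nat (C_stb L)) * FF b A L"
    proof -
      have c: "card (permutations_of_multiset (mset L)) * C_stb L = fact (length L)"
        using card_permutations_of_multiset_aux[of "mset L"] by (simp add: C_stb_alt)
      have "C_stb L \<noteq> 0" using c by (metis fact_nonzero mult_0_right)
      then have "(of_nat (card (permutations_of_multiset (mset L))) :: complex) = fact (length L) / of_nat (C_stb L)"
        using c by (metis (mono_tags, lifting) nonzero_eq_divide_eq of_nat_0_eq_iff of_nat_fact of_nat_mult)
      then show ?thesis by simp
    qed
    finally show "(\<Sum>L'\<in>{L'. L' \<in> comps k \<and> sort L' = L}. FF b A L' / fact (length L')) = (1 / of_nat (C_stb L)) * FF b A L"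
      using eq by simp
  qed
  finally show ?thesis by simp
qed


definition cc :: "('b \<Rightarrow> nat \<Rightarrow> complex) \<Rightarrow> 'b \<Rightarrow> nat \<Rightarrow> complex" where
  "cc b n j = (if j = 0 then 1 else b n j)"

definition Phi :: "'b set \<Rightarrow> nat list \<Rightarrow> (nat \<Rightarrow> 'b) \<Rightarrow> 'b \<Rightarrow> nat" where
  "Phi A L f = restrict (\<lambda>n. \<Sum>i<length L. if f i = n then L ! i else 0) A"

lemma sum_delta_inj:
  fixes g :: "nat \<Rightarrow> 'c::comm_monoid_add"
  assumes "inj_on f {..<m}" "i < m"
  shows "(\<Sum>i'<m. if f i' = f i then g i' else 0) = g i"
proof -
  have "(\<Sum>i'<m. if f i' = f i then g i' else 0) = (\<Sum>i'<m. if i' = i then g i' else 0)"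
    by (rule sum.cong[OF refl]) (use assms in \<open>auto dest: inj_onD\<close>)
  also have "\<dots> = g i" using assms(2) by (simp add: sum.delta)
  finally show ?thesis .
qed

lemma sum_delta_zero:
  fixes g :: "nat \<Rightarrow> 'c::comm_monoid_add"
  assumes "n \<notin> f ` {..<m}"
  shows "(\<Sum>i'<m. if f i' = n then g i' else 0) = 0"
  by (rule sum.neutral) (use assms in auto)

lemma finite_Injs: "finite A \<Longrightarrow> finite (Injs m A)"
  unfolding Injs_def by (rule finite_subset[of _ "{..<m} \<rightarrow>\<^sub>E A"]) (auto intro: finite_PiE)

lemma Phi_in_H:
  assumes A: "finite A" and p: "p \<in> Sigma (comps k) (\<lambda>L. Injs (length L) A)"
  shows "case_prod (Phi A) p \<in> {h \<in> A \<rightarrow>\<^sub>E {..k}. sum h A = k}"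
proof -
  obtain L f where pf: "p = (L, f)" by (cases p)
  define m where "m = length L"
  have L: "0 \<notin> set L" "sum_list L = k" using p pf by (auto simp: comps_def)
  have f: "f \<in> {..<m} \<rightarrow>\<^sub>E A" "inj_on f {..<m}" using p pf by (auto simp: Injs_def m_def)
  have sk: "(\<Sum>i<m. L ! i) = k" using L(2) by (simp add: sum_list_sum_nth m_def atLeast0LessThan)
  have le: "(\<Sum>i<m. if f i = n then L ! i else 0) \<le> k" for n
  proof -
    have "(\<Sum>i<m. if f i = n then L ! i else 0) \<le> (\<Sum>i<m. L ! i)" by (rule sum_mono) auto
    then show ?thesis using sk by simp
  qed
  have "(\<Sum>n\<in>A. \<Sum>i<m. if f i = n then L ! i else 0) = (\<Sum>i<m. \<Sum>n\<in>A. if f i = n then L ! i else 0)"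
    by (rule sum.swap)
  also have "\<dots> = (\<Sum>i<m. L ! i)"
  proof (rule sum.cong[OF refl])
    fix i assume "i \<in> {..<m}"
    then have "f i \<in> A" using f(1) by auto
    then show "(\<Sum>n\<in>A. if f i = n then L ! i else 0) = L ! i" using A by (simp add: sum.delta)
  qed
  finally have "(\<Sum>n\<in>A. \<Sum>i<m. if f i = n then L ! i else 0) = k" using sk by simp
  moreover have "sum (Phi A L f) A = (\<Sum>n\<in>A. \<Sum>i<m. if f i = n then L ! i else 0)"
    unfolding Phi_def m_def by (intro sum.cong) simp_all
  ultimately show ?thesis using le unfolding Phi_def pf m_def by auto
qed


lemma fiber_facts:
  assumes A: "finite A" and p: "(L, f) \<in> Sigma (comps k) (\<lambda>L. Injs (length L) A)"
    and ph: "Phi A L f = h"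
  shows "\<And>i. i < length L \<Longrightarrow> h (f i) = L ! i"
    and "f ` {..<length L} = {n\<in>A. h n \<noteq> 0}"
    and "length L = card {n\<in>A. h n \<noteq> 0}"
    and "(\<Prod>i<length L. b (f i) (L ! i)) = (\<Prod>n\<in>A. cc b n (h n))"
proof -
  have L: "0 \<notin> set L" "sum_list L = k" using p by (auto simp: comps_def)
  have f: "f \<in> {..<length L} \<rightarrow>\<^sub>E A" "inj_on f {..<length L}" using p by (auto simp: Injs_def)
  have hn: "h n = (\<Sum>i<length L. if f i = n then L ! i else 0)" if "n \<in> A" for n
  proof -
    have "h n = Phi A L f n" using ph by simp
    also have "\<dots> = (\<Sum>i<length L. if f i = n then L ! i else 0)" using that by (simp add: Phi_def)
    finally show ?thesis .
  qed
  show hf: "h (f i) = L ! i" if "i < length L" for i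
  proof -
    have "f i \<in> A" using f(1) that by auto
    then have "h (f i) = (\<Sum>i'<length L. if f i' = f i then L ! i' else 0)" by (rule hn)
    also have "\<dots> = L ! i" by (rule sum_delta_inj[OF f(2) that])
    finally show ?thesis .
  qed
  have Lnz: "L ! i \<noteq> 0" if "i < length L" for i
    using L(1) nth_mem[OF that] by metis
  show img: "f ` {..<length L} = {n\<in>A. h n \<noteq> 0}"
  proof (intro set_eqI iffI)
    fix n assume "n \<in> f ` {..<length L}"
    then obtain i where i: "i < length L" "n = f i" by auto
    have "f i \<in> A" using f(1) i(1) by auto
    then show "n \<in> {n\<in>A. h n \<noteq> 0}" using hf[OF i(1)] Lnz[OF i(1)] i(2) by simp
  next
    fix n assume n: "n \<in> {n\<in>A. h n \<noteq> 0}"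
    show "n \<in> f ` {..<length L}"
    proof (rule ccontr)
      assume "n \<notin> f ` {..<length L}"
      then have "(\<Sum>i<length L. if f i = n then L ! i else 0) = 0" by (rule sum_delta_zero)
      then show False using n hn[of n] by simp
    qed
  qed
  show "length L = card {n\<in>A. h n \<noteq> 0}"
    using card_image[OF f(2)] img by simp
  have "(\<Prod>n\<in>A. cc b n (h n)) = (\<Prod>n\<in>{n\<in>A. h n \<noteq> 0}. cc b n (h n))"
    by (rule prod.mono_neutral_right) (use A in \<open>auto simp: cc_def\<close>)
  also have "\<dots> = (\<Prod>n\<in>f ` {..<length L}. cc b n (h n))" using img by simp
  also have "\<dots> = (\<Prod>i<length L. cc b (f i) (h (f i)))" using prod.reindex[OF f(2)] by simp
  also have "\<dots> = (\<Prod>i<length L. b (f i) (L ! i))"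
  proof (rule prod.cong[OF refl])
    fix i assume "i \<in> {..<length L}"
    then have i: "i < length L" by simp
    show "cc b (f i) (h (f i)) = b (f i) (L ! i)" using Lnz[OF i] hf[OF i] by (simp add: cc_def)
  qed
  finally show "(\<Prod>i<length L. b (f i) (L ! i)) = (\<Prod>n\<in>A. cc b n (h n))" by simp
qed


lemma fiber_card:
  assumes A: "finite A" and h: "h \<in> {h \<in> A \<rightarrow>\<^sub>E {..k}. sum h A = k}"
  shows "card {p \<in> Sigma (comps k) (\<lambda>L. Injs (length L) A). case_prod (Phi A) p = h}
         = fact (card {n\<in>A. h n \<noteq> 0})"
proof -
  define S where "S = {n\<in>A. h n \<noteq> 0}"
  define Fh where "Fh = {p \<in> Sigma (comps k) (\<lambda>L. Injs (length L) A). case_prod (Phi A) p = h}"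
  have hP: "h \<in> A \<rightarrow>\<^sub>E {..k}" and hs: "sum h A = k" using h by auto
  have SA: "S \<subseteq> A" unfolding S_def by auto
  have finS: "finite S" using A SA finite_subset by blast
  have "bij_betw (\<lambda>p. map (snd p) [0..<length (fst p)]) Fh (permutations_of_set S)"
  proof (rule bij_betw_byWitness[where f' = "\<lambda>xs. (map h xs, restrict (\<lambda>i. xs ! i) {..<length xs})"])
    show "\<forall>p\<in>Fh. (map h (map (snd p) [0..<length (fst p)]),
            restrict (\<lambda>i. map (snd p) [0..<length (fst p)] ! i) {..<length (map (snd p) [0..<length (fst p)])}) = p"
    proof
      fix p assume p: "p \<in> Fh"
      obtain L f where pf: "p = (L, f)" by (cases p)
      have pL: "(L, f) \<in> Sigma (comps k) (\<lambda>L. Injs (length L) A)" and ph: "Phi A L f = h"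
        using p pf unfolding Fh_def by auto
      note ff = fiber_facts[OF A pL ph]
      have fP: "f \<in> {..<length L} \<rightarrow>\<^sub>E A" using pL by (auto simp: Injs_def)
      have e1: "map h (map f [0..<length L]) = L"
        by (rule nth_equalityI) (auto simp: ff(1))
      have e2: "restrict (\<lambda>i. map f [0..<length L] ! i) {..<length L} = f"
      proof (rule ext)
        fix x show "restrict (\<lambda>i. map f [0..<length L] ! i) {..<length L} x = f x"
        proof (cases "x < length L")
          case True then show ?thesis by simp
        next
          case False
          have "f x = undefined" using fP False PiE_arb[of f "{..<length L}" "\<lambda>_. A" x] by simp
          then show ?thesis using False by simp
        qed
      qed
      show "(map h (map (snd p) [0..<length (fst p)]),
            restrict (\<lambda>i. map (snd p) [0..<length (fst p)] ! i) {..<length (map (snd p) [0..<length (fst p)])}) = p"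
        using e1 e2 pf by simp
    qed
    show "\<forall>xs\<in>permutations_of_set S. map (snd (map h xs, restrict (\<lambda>i. xs ! i) {..<length xs}))
             [0..<length (fst (map h xs, restrict (\<lambda>i. xs ! i) {..<length xs}))] = xs"
      by (auto intro!: nth_equalityI)
    show "(\<lambda>p. map (snd p) [0..<length (fst p)]) ` Fh \<subseteq> permutations_of_set S"
    proof
      fix ys assume "ys \<in> (\<lambda>p. map (snd p) [0..<length (fst p)]) ` Fh"
      then obtain L f where p: "(L, f) \<in> Fh" and ys: "ys = map f [0..<length L]" by auto
      have pL: "(L, f) \<in> Sigma (comps k) (\<lambda>L. Injs (length L) A)" and ph: "Phi A L f = h"
        using p unfolding Fh_def by auto
      note ff = fiber_facts[OF A pL ph]
      have fi: "inj_on f {..<length L}" using pL by (auto simp: Injs_def)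
      have "set ys = S" using ff(2) ys S_def by (simp add: atLeast0LessThan)
      moreover have "distinct ys" using fi ys by (simp add: distinct_map atLeast0LessThan)
      ultimately show "ys \<in> permutations_of_set S" by (simp add: permutations_of_set_def)
    qed
    show "(\<lambda>xs. (map h xs, restrict (\<lambda>i. xs ! i) {..<length xs})) ` permutations_of_set S \<subseteq> Fh"
    proof
      fix q assume "q \<in> (\<lambda>xs. (map h xs, restrict (\<lambda>i. xs ! i) {..<length xs})) ` permutations_of_set S"
      then obtain xs where xs: "xs \<in> permutations_of_set S" and q: "q = (map h xs, restrict (\<lambda>i. xs ! i) {..<length xs})"
        by auto
      have sx: "set xs = S" and dx: "distinct xs" using xs by (auto simp: permutations_of_set_def)
      define L where "L = map h xs"
      define f where "f = restrict (\<lambda>i. xs ! i) {..<length xs}"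
      have lL: "length L = length xs" unfolding L_def by simp
      have L0: "0 \<notin> set L" unfolding L_def using sx S_def by auto
      have "sum_list L = sum h (set xs)" unfolding L_def using dx by (simp add: sum_list_distinct_conv_sum_set)
      also have "\<dots> = sum h A" unfolding sx S_def
        by (rule sum.mono_neutral_left) (use A in auto)
      finally have Lk: "sum_list L = k" using hs by simp
      have xA: "xs ! i \<in> A" if "i < length xs" for i using nth_mem[OF that] sx SA by blast
      have fP: "f \<in> {..<length L} \<rightarrow>\<^sub>E A"
        unfolding f_def lL using xA by (simp add: restrict_PiE_iff)
      have "inj_on (\<lambda>i. xs ! i) {..<length xs}" using dx by (intro inj_on_nth) auto
      then have fi: "inj_on f {..<length L}"
        unfolding f_def lL by (rule inj_on_cong[THEN iffD1, rotated]) auto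
      have img: "(\<lambda>i. xs ! i) ` {..<length xs} = set xs"
        by (auto simp: in_set_conv_nth)
      have "Phi A L f = h"
      proof (rule ext)
        fix n show "Phi A L f n = h n"
        proof (cases "n \<in> A")
          case False
          have "h n = undefined" using hP False PiE_arb[of h A "\<lambda>_. {..k}" n] by simp
          then show ?thesis using False by (simp add: Phi_def)
        next
          case True
          have "Phi A L f n = (\<Sum>i<length xs. if xs ! i = n then h (xs ! i) else 0)"
            using True unfolding Phi_def f_def L_def by (auto intro!: sum.cong)
          also have "\<dots> = h n"
          proof (cases "n \<in> set xs")
            case True
            then obtain j where j: "j < length xs" "n = xs ! j" by (auto simp: in_set_conv_nth)
            have "(\<Sum>i<length xs. if xs ! i = xs ! j then h (xs ! i) else 0) = h (xs ! j)"
              using sum_delta_inj[of "\<lambda>i. xs ! i" "length xs" j "\<lambda>i. h (xs ! i)"] dx j(1)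
              by (simp add: inj_on_nth)
            then show ?thesis using j by simp
          next
            case False
            then have "n \<notin> (\<lambda>i. xs ! i) ` {..<length xs}" using img by simp
            then have "(\<Sum>i<length xs. if xs ! i = n then h (xs ! i) else 0) = 0" by (rule sum_delta_zero)
            moreover have "h n = 0" using False \<open>n \<in> A\<close> sx S_def by auto
            ultimately show ?thesis by simp
          qed
          finally show ?thesis .
        qed
      qed
      then show "q \<in> Fh" unfolding Fh_def q
        using L0 Lk fP fi by (auto simp: comps_def Injs_def L_def f_def)
    qed
  qed
  then have "card Fh = card (permutations_of_set S)" by (rule bij_betw_same_card)
  also have "\<dots> = fact (card S)" using finS by simp
  finally show ?thesis unfolding Fh_def S_def .
qed


lemma comps_sum:
  assumes A: "finite A"
  shows "(\<Sum>L\<in>comps k. FF b A L / fact (length L))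
       = (\<Sum>h\<in>{h\<in>A \<rightarrow>\<^sub>E {..k}. sum h A = k}. \<Prod>n\<in>A. cc b n (h n))"
proof -
  define SS where "SS = Sigma (comps k) (\<lambda>L. Injs (length L) A)"
  define H where "H = {h\<in>A \<rightarrow>\<^sub>E {..k}. sum h A = k}"
  define W where "W = (\<lambda>(L, f). (\<Prod>i<length L. b (f i) (L ! i)) / fact (length L))"
  have finSS: "finite SS" unfolding SS_def
    using finite_comps finite_Injs[OF A] by (intro finite_SigmaI) auto
  have finH: "finite H" unfolding H_def
    by (rule finite_subset[of _ "A \<rightarrow>\<^sub>E {..k}"]) (auto intro: finite_PiE A)
  have "(\<Sum>L\<in>comps k. FF b A L / fact (length L))
      = (\<Sum>L\<in>comps k. \<Sum>f\<in>Injs (length L) A. (\<Prod>i<length L. b (f i) (L ! i)) / fact (length L))"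
    unfolding FF_def by (simp add: sum_divide_distrib)
  also have "\<dots> = (\<Sum>p\<in>SS. W p)"
    unfolding SS_def W_def
    by (rule sum.Sigma) (use finite_comps finite_Injs[OF A] in auto)
  also have "\<dots> = (\<Sum>h\<in>H. \<Sum>p\<in>{p\<in>SS. case_prod (Phi A) p = h}. W p)"
  proof (rule sum.group[symmetric])
    show "finite SS" by (rule finSS)
    show "finite H" by (rule finH)
    show "case_prod (Phi A) ` SS \<subseteq> H" unfolding H_def SS_def using Phi_in_H[OF A] by blast
  qed
  also have "\<dots> = (\<Sum>h\<in>H. \<Prod>n\<in>A. cc b n (h n))"
  proof (rule sum.cong[OF refl])
    fix h assume h: "h \<in> H"
    define S where "S = {n\<in>A. h n \<noteq> 0}"
    have "(\<Sum>p\<in>{p\<in>SS. case_prod (Phi A) p = h}. W p)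
        = (\<Sum>p\<in>{p\<in>SS. case_prod (Phi A) p = h}. (\<Prod>n\<in>A. cc b n (h n)) / fact (card S))"
    proof (rule sum.cong[OF refl])
      fix p assume p: "p \<in> {p\<in>SS. case_prod (Phi A) p = h}"
      obtain L f where pf: "p = (L, f)" by (cases p)
      have pL: "(L, f) \<in> Sigma (comps k) (\<lambda>L. Injs (length L) A)" and ph: "Phi A L f = h"
        using p pf unfolding SS_def by auto
      note ff = fiber_facts[OF A pL ph]
      show "W p = (\<Prod>n\<in>A. cc b n (h n)) / fact (card S)"
        unfolding pf W_def S_def using ff(3,4) by simp
    qed
    also have "\<dots> = of_nat (card {p\<in>SS. case_prod (Phi A) p = h}) * (\<Prod>n\<in>A. cc b n (h n)) / fact (card S)"
      by simp
    also have "card {p\<in>SS. case_prod (Phi A) p = h} = fact (card S)"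
      unfolding SS_def S_def by (rule fiber_card[OF A]) (use h H_def in simp)
    finally show "(\<Sum>p\<in>{p\<in>SS. case_prod (Phi A) p = h}. W p) = (\<Prod>n\<in>A. cc b n (h n))"
      by simp
  qed
  finally show ?thesis unfolding H_def .
qed


lemma inner_sign_sum:
  fixes b :: "'b \<Rightarrow> nat \<Rightarrow> complex"
  assumes A: "finite A"
  shows "(\<Sum>\<sigma>\<in>{\<sigma>. \<sigma> permutes {..<length L}}. of_int (sign \<sigma>) *
            (\<Prod>C\<in>cycles_of \<sigma> (length L). \<Sum>n\<in>A. \<Prod>i\<in>C. b n (L ! i))) = FF b A L"
proof -
  define m where "m = length L"
  define P where "P = {\<sigma>. \<sigma> permutes {..<m}}"
  define W where "W = (\<lambda>f. \<Prod>i<m. b (f i) (L ! i))"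
  have finP: "finite P" unfolding P_def by (rule finite_permutations) simp
  have finF: "finite ({..<m} \<rightarrow>\<^sub>E A)" using A by (intro finite_PiE) auto
  have "(\<Sum>\<sigma>\<in>P. of_int (sign \<sigma>) * (\<Prod>C\<in>cycles_of \<sigma> m. \<Sum>n\<in>A. \<Prod>i\<in>C. b n (L ! i)))
      = (\<Sum>\<sigma>\<in>P. of_int (sign \<sigma>) * (\<Sum>f\<in>{f\<in>{..<m} \<rightarrow>\<^sub>E A. \<forall>i<m. f (\<sigma> i) = f i}. W f))"
  proof (rule sum.cong[OF refl])
    fix \<sigma> assume "\<sigma> \<in> P"
    then have p: "\<sigma> permutes {..<m}" unfolding P_def by simp
    show "of_int (sign \<sigma>) * (\<Prod>C\<in>cycles_of \<sigma> m. \<Sum>n\<in>A. \<Prod>i\<in>C. b n (L ! i))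
        = of_int (sign \<sigma>) * (\<Sum>f\<in>{f\<in>{..<m} \<rightarrow>\<^sub>E A. \<forall>i<m. f (\<sigma> i) = f i}. W f)"
      using cyc_expand[OF p A, of "\<lambda>n i. b n (L ! i)"] unfolding W_def by simp
  qed
  also have "\<dots> = (\<Sum>\<sigma>\<in>P. \<Sum>f\<in>{..<m} \<rightarrow>\<^sub>E A. if (\<forall>i<m. f (\<sigma> i) = f i) then of_int (sign \<sigma>) * W f else 0)"
    by (simp add: sum.inter_filter[OF finF] sum_distrib_left if_distrib cong: if_cong)
  also have "\<dots> = (\<Sum>f\<in>{..<m} \<rightarrow>\<^sub>E A. \<Sum>\<sigma>\<in>P. if (\<forall>i<m. f (\<sigma> i) = f i) then of_int (sign \<sigma>) * W f else 0)"
    by (rule sum.swap)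
  also have "\<dots> = (\<Sum>f\<in>{..<m} \<rightarrow>\<^sub>E A. W f * (\<Sum>\<sigma>\<in>{\<sigma>. \<sigma> permutes {..<m} \<and> (\<forall>i<m. f (\<sigma> i) = f i)}. of_int (sign \<sigma>)))"
  proof (rule sum.cong[OF refl])
    fix f :: "nat \<Rightarrow> 'b"
    have "{\<sigma>. \<sigma> permutes {..<m} \<and> (\<forall>i<m. f (\<sigma> i) = f i)} = {\<sigma>\<in>P. \<forall>i<m. f (\<sigma> i) = f i}"
      unfolding P_def by auto
    then show "(\<Sum>\<sigma>\<in>P. if (\<forall>i<m. f (\<sigma> i) = f i) then of_int (sign \<sigma>) * W f else 0)
        = W f * (\<Sum>\<sigma>\<in>{\<sigma>. \<sigma> permutes {..<m} \<and> (\<forall>i<m. f (\<sigma> i) = f i)}. of_int (sign \<sigma>))"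
      by (simp add: sum.inter_filter[OF finP] sum_distrib_left mult.commute if_distrib cong: if_cong)
  qed
  also have "\<dots> = (\<Sum>f\<in>{..<m} \<rightarrow>\<^sub>E A. if inj_on f {..<m} then W f else 0)"
    by (rule sum.cong[OF refl]) (simp add: sign_sum_fix)
  also have "\<dots> = (\<Sum>f\<in>Injs m A. W f)"
    unfolding Injs_def by (simp add: sum.inter_filter[OF finF])
  finally show ?thesis unfolding FF_def W_def m_def P_def .
qed

lemma finite_identity:
  fixes b :: "'b \<Rightarrow> nat \<Rightarrow> complex"
  assumes A: "finite A"
  shows "fps_nth (\<Prod>n\<in>A. Abs_fps (cc b n)) k
    = (\<Sum>L\<in>partitions_of k. (1 / of_nat (C_stb L)) *
         (\<Sum>\<sigma>\<in>{\<sigma>. \<sigma> permutes {..<length L}}. of_int (sign \<sigma>) *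
            (\<Prod>C\<in>cycles_of \<sigma> (length L). \<Sum>n\<in>A. \<Prod>i\<in>C. b n (L ! i))))"
proof -
  have "fps_nth (\<Prod>n\<in>A. Abs_fps (cc b n)) k
      = (\<Sum>h\<in>{h\<in>A \<rightarrow>\<^sub>E {..k}. sum h A = k}. \<Prod>n\<in>A. cc b n (h n))"
    using fps_prod_nth[OF A, of k k "\<lambda>n. Abs_fps (cc b n)"] by simp
  also have "\<dots> = (\<Sum>L\<in>comps k. FF b A L / fact (length L))"
    by (rule comps_sum[OF A, symmetric])
  also have "\<dots> = (\<Sum>L\<in>partitions_of k. (1 / of_nat (C_stb L)) * FF b A L)"
    by (rule sym_sum[symmetric])
  finally show ?thesis by (simp add: inner_sign_sum[OF A])
qed



lemma cyc_partial_sums: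
  fixes a :: "nat \<Rightarrow> nat \<Rightarrow> complex"
  assumes series_conv: "\<And>ks. ks \<noteq> [] \<Longrightarrow> 0 \<notin> set ks \<Longrightarrow>
                         summable (\<lambda>n. \<Prod>j<length ks. a (Suc n) (ks ! j))"
    and L: "0 \<notin> set L" and p: "\<sigma> permutes {..<length L}" and C: "C \<in> cycles_of \<sigma> (length L)"
  shows "(\<lambda>N. \<Sum>n\<in>{1..N}. \<Prod>i\<in>C. a n (L ! i)) \<longlonglongrightarrow> (\<Sum>n. \<Prod>i\<in>C. a (Suc n) (L ! i))"
proof -
  obtain i0 where i0: "i0 < length L" "C = orbit \<sigma> i0" using C unfolding cycles_of_def by auto
  have Csub: "C \<subseteq> {..<length L}" using orbit_facts(2)[OF p i0(1)] i0(2) by simp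
  have finC: "finite C" using Csub finite_subset by blast
  have Cne: "C \<noteq> {}" using orbit_facts(1)[OF p i0(1)] i0(2) by auto
  define xs where "xs = sorted_list_of_set C"
  have sx: "set xs = C" and dx: "distinct xs" using finC unfolding xs_def by auto
  define ks where "ks = map (\<lambda>i. L ! i) xs"
  have kne: "ks \<noteq> []" using sx Cne unfolding ks_def by auto
  have k0: "0 \<notin> set ks"
  proof
    assume "0 \<in> set ks"
    then have "0 \<in> (\<lambda>i. L ! i) ` set xs" unfolding ks_def by (simp only: set_map)
    then obtain i where i0: "i \<in> set xs" "0 = L ! i" by (rule imageE)
    then have i: "i \<in> set xs" "L ! i = 0" by simp_all
    then have "i < length L" using Csub sx by blast
    then have "L ! i \<in> set L" by (rule nth_mem)
    then have "0 \<in> set L" using i(2) by simp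
    then show False using L by simp
  qed
  have img: "(\<lambda>j. xs ! j) ` {..<length xs} = set xs" by (auto simp: in_set_conv_nth)
  have eq: "(\<Prod>j<length ks. a (Suc n) (ks ! j)) = (\<Prod>i\<in>C. a (Suc n) (L ! i))" for n
  proof -
    have "(\<Prod>j<length ks. a (Suc n) (ks ! j)) = (\<Prod>j<length xs. a (Suc n) (L ! (xs ! j)))"
      unfolding ks_def by simp
    also have "\<dots> = (\<Prod>i\<in>(\<lambda>j. xs ! j) ` {..<length xs}. a (Suc n) (L ! i))"
      by (rule prod.reindex[symmetric, unfolded o_def]) (use dx in \<open>auto intro: inj_on_nth\<close>)
    finally show ?thesis using img sx by simp
  qed
  have "summable (\<lambda>n. \<Prod>i\<in>C. a (Suc n) (L ! i))"
    using series_conv[OF kne k0] eq by simp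
  then have "(\<lambda>N. \<Sum>n<N. \<Prod>i\<in>C. a (Suc n) (L ! i)) \<longlonglongrightarrow> (\<Sum>n. \<Prod>i\<in>C. a (Suc n) (L ! i))"
    by (rule summable_LIMSEQ)
  moreover have "(\<Sum>n\<in>{1..N}. \<Prod>i\<in>C. a n (L ! i)) = (\<Sum>n<N. \<Prod>i\<in>C. a (Suc n) (L ! i))" for N
    using sum.atLeast1_atMost_eq[of "\<lambda>n. \<Prod>i\<in>C. a n (L ! i)" N] by simp
  ultimately show ?thesis by simp
qed

theorem mainTheorem2:
  fixes a :: "nat \<Rightarrow> nat \<Rightarrow> complex" and X :: "nat \<Rightarrow> complex"
    and P :: "complex \<Rightarrow> complex" and r :: real and k :: nat
  assumes r_pos: "r > 0"
    and analytic: "\<And>n z. n \<ge> 1 \<Longrightarrow> z \<in> ball 0 r \<Longrightarrow> summable (\<lambda>j. a n (Suc j) * z ^ Suc j)"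
    and unif: "uniform_limit (ball 0 r) (\<lambda>N z. \<Prod>n\<in>{1..N}. factor_fun a n z) P sequentially"
    and series_conv: "\<And>ks. ks \<noteq> [] \<Longrightarrow> 0 \<notin> set ks \<Longrightarrow>
                         summable (\<lambda>n. \<Prod>j<length ks. a (Suc n) (ks ! j))"
    and expansion: "\<forall>\<^sub>F z in nhds 0. (\<lambda>j. X (Suc j) * z ^ Suc j) sums (P z - 1)"
    and k_pos: "k \<ge> 1"
  shows "X k = (\<Sum>L\<in>partitions_of k.
                  (1 / of_nat (C_stb L)) *
                  (\<Sum>\<sigma>\<in>{\<sigma>. \<sigma> permutes {..<length L}}. of_int (sign \<sigma>) * A_coef a \<sigma> L))"
proof -
  define F where "F = (\<lambda>n. Abs_fps (cc a n))"
  define Q where "Q = (\<lambda>N z. \<Prod>n\<in>{1..N}. factor_fun a n z)"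
  have Fsum: "summable (\<lambda>j. fps_nth (F n) j * z ^ j)" if "n \<ge> 1" "z \<in> ball 0 r" for n z
  proof -
    have "summable (\<lambda>j. a n (Suc j) * z ^ Suc j)" using analytic that by blast
    then have "summable (\<lambda>j. fps_nth (F n) (Suc j) * z ^ Suc j)" by (simp add: F_def cc_def)
    then show ?thesis by (subst summable_Suc_iff[symmetric])
  qed
  have rad: "ereal r \<le> fps_conv_radius (F n)" if n: "n \<ge> 1" for n
    unfolding fps_conv_radius_def
  proof (rule conv_radius_geI_ex')
    fix \<rho> :: real assume \<rho>: "0 < \<rho>" "ereal \<rho> < ereal r"
    have "of_real \<rho> \<in> ball (0::complex) r" using \<rho> by auto
    then show "summable (\<lambda>j. fps_nth (F n) j * of_real \<rho> ^ j)" using Fsum n by blast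
  qed
  have eval: "eval_fps (F n) z = factor_fun a n z" if "n \<ge> 1" "z \<in> ball 0 r" for n z
  proof -
    have s: "summable (\<lambda>j. fps_nth (F n) j * z ^ j)" using Fsum that by blast
    have "eval_fps (F n) z = (\<Sum>j. fps_nth (F n) j * z ^ j)" by (simp add: eval_fps_def)
    also have "\<dots> = fps_nth (F n) 0 * z ^ 0 + (\<Sum>j. fps_nth (F n) (Suc j) * z ^ Suc j)"
      using suminf_split_head[OF s] by simp
    also have "\<dots> = factor_fun a n z" by (simp add: F_def cc_def factor_fun_def)
    finally show ?thesis .
  qed
  have ball_sub: "ball (0::complex) r \<subseteq> eball 0 (fps_conv_radius (F n))" if "n \<ge> 1" for n
  proof
    fix z :: complex assume "z \<in> ball 0 r"
    then have "ereal (cmod z) < ereal r" by simp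
    then have "ereal (cmod z) < fps_conv_radius (F n)" using rad[OF that] by (rule order_less_le_trans)
    then show "z \<in> eball 0 (fps_conv_radius (F n))" by simp
  qed
  have nb: "eventually (\<lambda>z. z \<in> ball 0 r) (nhds (0::complex))"
    by (rule eventually_nhds_in_open) (use r_pos in auto)
  have hexp: "factor_fun a n has_fps_expansion F n" if "n \<ge> 1" for n
    unfolding has_fps_expansion_def
  proof
    show "0 < fps_conv_radius (F n)" using rad[OF that] r_pos by (metis ereal_less(2) order_less_le_trans)
    show "\<forall>\<^sub>F z in nhds 0. eval_fps (F n) z = factor_fun a n z"
      using nb by eventually_elim (use eval that in auto)
  qed
  have Qexp: "Q N has_fps_expansion (\<Prod>n\<in>{1..N}. F n)" for N
    unfolding Q_def by (rule has_fps_expansion_prod) (use hexp in auto)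
  have Qhol: "Q N holomorphic_on ball 0 r" for N
    unfolding Q_def
  proof (rule holomorphic_on_prod)
    fix n assume "n \<in> {1..N}"
    then have n: "n \<ge> 1" by simp
    show "factor_fun a n holomorphic_on ball 0 r"
      by (rule holomorphic_transform[OF holomorphic_on_eval_fps[OF ball_sub[OF n]]]) (use eval n in auto)
  qed
  have lim1: "(\<lambda>N. (deriv ^^ k) (Q N) 0) \<longlonglongrightarrow> (deriv ^^ k) P 0"
    by (rule higher_deriv_complex_uniform_limit) (use unif Qhol r_pos in \<open>auto simp: Q_def\<close>)
  have lim2: "(\<lambda>N. fps_nth (\<Prod>n\<in>{1..N}. F n) k) \<longlonglongrightarrow> (deriv ^^ k) P 0 / fact k"
    unfolding fps_nth_fps_expansion[OF Qexp] by (intro tendsto_divide lim1 tendsto_const) simp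
  define G where "G = Abs_fps (\<lambda>j. if j = 0 then 1 else X j)"
  obtain d where d: "d > 0" "\<And>z. dist z 0 < d \<Longrightarrow> (\<lambda>j. X (Suc j) * z ^ Suc j) sums (P z - 1)"
    using expansion unfolding eventually_nhds_metric by blast
  have Gsums: "(\<lambda>j. fps_nth G j * z ^ j) sums P z" if "dist z 0 < d" for z
  proof -
    have "(\<lambda>j. fps_nth G (Suc j) * z ^ Suc j) sums (P z - 1)" using d(2)[OF that] by (simp add: G_def)
    then have "(\<lambda>j. fps_nth G j * z ^ j) sums (P z - 1 + fps_nth G 0 * z ^ 0)"
      by (subst sums_Suc_iff[symmetric])
    then show ?thesis by (simp add: G_def)
  qed
  have Grad: "ereal d \<le> fps_conv_radius G"
    unfolding fps_conv_radius_def
  proof (rule conv_radius_geI_ex')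
    fix \<rho> :: real assume \<rho>: "0 < \<rho>" "ereal \<rho> < ereal d"
    have "dist (of_real \<rho> :: complex) 0 < d" using \<rho> by auto
    then show "summable (\<lambda>j. fps_nth G j * of_real \<rho> ^ j)" using Gsums sums_summable by blast
  qed
  have Gexp: "P has_fps_expansion G"
    unfolding has_fps_expansion_def
  proof
    show "0 < fps_conv_radius G" using Grad d(1) by (metis ereal_less(2) order_less_le_trans)
    have "eventually (\<lambda>z. z \<in> ball 0 d) (nhds (0::complex))"
      by (rule eventually_nhds_in_open) (use d in auto)
    then show "\<forall>\<^sub>F z in nhds 0. eval_fps G z = P z"
    proof eventually_elim
      case (elim z)
      then have "dist z 0 < d" by (simp add: dist_commute)
      then show ?case unfolding eval_fps_def using Gsums sums_unique by metis
    qed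
  qed
  have Xk: "X k = (deriv ^^ k) P 0 / fact k"
    using fps_nth_fps_expansion[OF Gexp, of k] k_pos by (simp add: G_def)
  define RHS where "RHS = (\<Sum>L\<in>partitions_of k.
                  (1 / of_nat (C_stb L)) *
                  (\<Sum>\<sigma>\<in>{\<sigma>. \<sigma> permutes {..<length L}}. of_int (sign \<sigma>) * A_coef a \<sigma> L))"
  have lim3: "(\<lambda>N. fps_nth (\<Prod>n\<in>{1..N}. F n) k) \<longlonglongrightarrow> RHS"
  proof -
    have "(\<lambda>N. fps_nth (\<Prod>n\<in>{1..N}. F n) k) = (\<lambda>N. \<Sum>L\<in>partitions_of k. (1 / of_nat (C_stb L)) *
         (\<Sum>\<sigma>\<in>{\<sigma>. \<sigma> permutes {..<length L}}. of_int (sign \<sigma>) *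
            (\<Prod>C\<in>cycles_of \<sigma> (length L). \<Sum>n\<in>{1..N}. \<Prod>i\<in>C. a n (L ! i))))"
      unfolding F_def by (intro ext finite_identity) simp
    moreover have "(\<lambda>N. \<Sum>L\<in>partitions_of k. (1 / of_nat (C_stb L)) *
         (\<Sum>\<sigma>\<in>{\<sigma>. \<sigma> permutes {..<length L}}. of_int (sign \<sigma>) *
            (\<Prod>C\<in>cycles_of \<sigma> (length L). \<Sum>n\<in>{1..N}. \<Prod>i\<in>C. a n (L ! i)))) \<longlonglongrightarrow> RHS"
      unfolding RHS_def A_coef_def
    proof (intro tendsto_sum tendsto_mult tendsto_const tendsto_prod)
      fix L \<sigma> C assume L: "L \<in> partitions_of k" and s: "\<sigma> \<in> {\<sigma>. \<sigma> permutes {..<length L}}"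
        and C: "C \<in> cycles_of \<sigma> (length L)"
      show "(\<lambda>N. \<Sum>n\<in>{1..N}. \<Prod>i\<in>C. a n (L ! i)) \<longlonglongrightarrow> (\<Sum>n. \<Prod>i\<in>C. a (Suc n) (L ! i))"
        by (rule cyc_partial_sums[OF series_conv _ _ C]) (use L s in \<open>auto simp: partitions_of_def\<close>)
    qed
    ultimately show ?thesis by simp
  qed
  have "RHS = (deriv ^^ k) P 0 / fact k" using LIMSEQ_unique[OF lim3 lim2] .
  then show ?thesis using Xk RHS_def by simp
qed

end
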